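(* Assume the Green's functions $G_P[2T]$, $G_N[T]$, $G_D[T]$ exist. Let $\sigma_1,\sigma_2\in L^1(I)$, let $u_N$ be the unique solution of $Lu=\sigma_1$ a.e. on $I$, $u\in X_{N,T}$, and $u_D$ the unique solution of $Lu=\sigma_2$ a.e. on $I$, $u\in X_{D,T}$. Then: 1. If $G_P[2T]\ge0$ on $J\times J$ and $|\sigma_2(t)|\le\sigma_1(t)$ for a.e. $t\in I$, then $|u_D(t)|\le u_N(t)$ for all $t\in I$. 2. If $G_P[2T]\le0$ on $J\times J$ and $0\le\sigma_2(t)\le\sigma_1(t)$ for a.e. $t\in I$, then $u_N(t)\le0$ and $u_N(t)\le u_D(t)$ for all $t\in I$. 3. If $G_P[2T]\le0$ on $J\times J$ and $\sigma_1(t)\le\sigma_2(t)\le0$ for a.e. $t\in I$, then $u_N(t)\ge0$ and $u_D(t)\le u_N(t)$ for all $t\in I$.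
   Context: Fix $n\ge 1$, $T>0$, $I=[0,T]$, $J=[0,2T]$. $W^{2n,1}(K)$: $u\in C^{2n-1}(K)$ with $u^{(2n-1)}$ absolutely continuous. Let $a_0,\dots,a_{2n-1}\in L^\alpha(I)$, $\alpha\ge1$, $Lu=u^{(2n)}+\sum_{k=0}^{2n-1}a_ku^{(k)}$ on $I$. $\widetilde L u=u^{(2n)}+\sum_{k=0}^{n-1}(\hat a_{2k+1}u^{(2k+1)}+\tilde a_{2k}u^{(2k)})$ on $J$, where $\tilde a_{2k}=a_{2k}$, $\hat a_{2k+1}=a_{2k+1}$ on $I$, and $\tilde a_{2k}(t)=a_{2k}(2T-t)$, $\hat a_{2k+1}(t)=-a_{2k+1}(2T-t)$ for $t\in(T,2T]$. An operator $M$ is nonresonant in $X$ if $Mu=0$ a.e., $u\in X$ forces $u\equiv0$; its Green's function $G$ then gives the unique solution $u(t)=\int G(t,s)\sigma(s)ds$ of $Mu=\sigma$, $u\in X$. $X_{N,T}=\{u\in W^{2n,1}(I): u^{(2k+1)}(0)=u^{(2k+1)}(T)=0,\ k=0,\dots,n-1\}$, $X_{D,T}=\{u\in W^{2n,1}(I): u^{(2k)}(0)=u^{(2k)}(T)=0,\ k=0,\dots,n-1\}$; $G_N[T]$, $G_D[T]$ are the Green's functions of $L$ on these spaces. $G_P[2T]$: Green's function of $\widetilde L$ on $\{u\in W^{2n,1}(J): u^{(k)}(0)=u^{(k)}(2T),\ k=0,\dots,2n-1\}$. *)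

theory Defs
  imports "HOL-Analysis.Analysis"
begin

definition abs_cont_on :: "real set \<Rightarrow> (real \<Rightarrow> real) \<Rightarrow> bool" where
  "abs_cont_on K f \<longleftrightarrow>
     (\<forall>\<epsilon>>0. \<exists>\<delta>>0. \<forall>(N::nat) (x::nat \<Rightarrow> real) (y::nat \<Rightarrow> real).
        (\<forall>i<N. x i \<in> K \<and> y i \<in> K \<and> x i \<le> y i) \<and>
        (\<forall>i<N. \<forall>j<N. i \<noteq> j \<longrightarrow> y i \<le> x j \<or> y j \<le> x i) \<and>
        (\<Sum>i<N. y i - x i) < \<delta>
        \<longrightarrow> (\<Sum>i<N. \<bar>f (y i) - f (x i)\<bar>) < \<epsilon>)"

text \<open>u belongs to W^{m,1}([0,b]) with derivative family D: D k is the k-th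
  derivative of u on [0,b] (one-sided at the endpoints) for k \<le> m-1,
  and D (m-1) is absolutely continuous.\<close>
definition W_derivs :: "nat \<Rightarrow> real \<Rightarrow> (real \<Rightarrow> real) \<Rightarrow> (nat \<Rightarrow> real \<Rightarrow> real) \<Rightarrow> bool" where
  "W_derivs m b u D \<longleftrightarrow>
     (\<forall>t\<in>{0..b}. D 0 t = u t) \<and>
     (\<forall>k<m - 1. \<forall>t\<in>{0..b}. (D k has_real_derivative D (Suc k) t) (at t within {0..b})) \<and>
     abs_cont_on {0..b} (D (m - 1))"

text \<open>u solves  u^{(m)} + sum_{k<m} c_k u^{(k)} = sigma  a.e. on [0,b],
  u in W^{m,1}([0,b]) and the boundary conditions BC (stated on the derivative family).
  u^{(m)}(t) is the derivative of u^{(m-1)} at t, which exists a.e.\<close>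
definition bvp_sol :: "nat \<Rightarrow> real \<Rightarrow> (nat \<Rightarrow> real \<Rightarrow> real) \<Rightarrow> ((nat \<Rightarrow> real \<Rightarrow> real) \<Rightarrow> bool)
    \<Rightarrow> (real \<Rightarrow> real) \<Rightarrow> (real \<Rightarrow> real) \<Rightarrow> bool" where
  "bvp_sol m b c BC u \<sigma> \<longleftrightarrow>
     (\<exists>D. W_derivs m b u D \<and> BC D \<and>
        (AE t in lebesgue_on {0..b}.
           \<exists>d. (D (m - 1) has_real_derivative d) (at t within {0..b}) \<and>
               d + (\<Sum>k<m. c k t * D k t) = \<sigma> t))"

definition nonresonant :: "nat \<Rightarrow> real \<Rightarrow> (nat \<Rightarrow> real \<Rightarrow> real) \<Rightarrow> ((nat \<Rightarrow> real \<Rightarrow> real) \<Rightarrow> bool) \<Rightarrow> bool" where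
  "nonresonant m b c BC \<longleftrightarrow>
     (\<forall>u. bvp_sol m b c BC u (\<lambda>_. 0) \<longrightarrow> (\<forall>t\<in>{0..b}. u t = 0))"

definition green_fun :: "nat \<Rightarrow> real \<Rightarrow> (nat \<Rightarrow> real \<Rightarrow> real) \<Rightarrow> ((nat \<Rightarrow> real \<Rightarrow> real) \<Rightarrow> bool)
    \<Rightarrow> (real \<Rightarrow> real \<Rightarrow> real) \<Rightarrow> bool" where
  "green_fun m b c BC G \<longleftrightarrow>
     nonresonant m b c BC \<and>
     (\<forall>\<sigma>. \<sigma> absolutely_integrable_on {0..b} \<longrightarrow>
        (\<forall>t\<in>{0..b}. (\<lambda>s. G t s * \<sigma> s) absolutely_integrable_on {0..b}) \<and>
        bvp_sol m b c BC (\<lambda>t. integral {0..b} (\<lambda>s. G t s * \<sigma> s)) \<sigma>)"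

text \<open>Boundary conditions (n = half the order).\<close>
definition BC_N :: "nat \<Rightarrow> real \<Rightarrow> (nat \<Rightarrow> real \<Rightarrow> real) \<Rightarrow> bool" where
  "BC_N n T D \<longleftrightarrow> (\<forall>k<n. D (2*k+1) 0 = 0 \<and> D (2*k+1) T = 0)"

definition BC_D :: "nat \<Rightarrow> real \<Rightarrow> (nat \<Rightarrow> real \<Rightarrow> real) \<Rightarrow> bool" where
  "BC_D n T D \<longleftrightarrow> (\<forall>k<n. D (2*k) 0 = 0 \<and> D (2*k) T = 0)"

definition BC_P :: "nat \<Rightarrow> real \<Rightarrow> (nat \<Rightarrow> real \<Rightarrow> real) \<Rightarrow> bool" where
  "BC_P m S D \<longleftrightarrow> (\<forall>k<m. D k 0 = D k S)"

definition ext_coeff :: "real \<Rightarrow> (nat \<Rightarrow> real \<Rightarrow> real) \<Rightarrow> nat \<Rightarrow> real \<Rightarrow> real" where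
  "ext_coeff T a k t =
     (if t \<le> T then a k t
      else if even k then a k (2*T - t) else - a k (2*T - t))"

end

theory Submission
  imports Defs
begin


lemma AE_on_iff:
  fixes a b :: real
  shows "(AE t in lebesgue_on {a..b}. P t) \<longleftrightarrow> (\<exists>N. negligible N \<and> (\<forall>t\<in>{a..b}-N. P t))"
proof
  assume "AE t in lebesgue_on {a..b}. P t"
  then have "AE t in lebesgue. t \<in> {a..b} \<longrightarrow> P t"
    by (subst (asm) AE_restrict_space_iff) auto
  then obtain N where N: "N \<in> null_sets lebesgue" "{t \<in> space lebesgue. \<not> (t \<in> {a..b} \<longrightarrow> P t)} \<subseteq> N"
    unfolding eventually_ae_filter by blast
  then show "\<exists>N. negligible N \<and> (\<forall>t\<in>{a..b}-N. P t)"
    by (intro exI[of _ N]) (auto simp: negligible_iff_null_sets)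
next
  assume "\<exists>N. negligible N \<and> (\<forall>t\<in>{a..b}-N. P t)"
  then obtain N where N: "negligible N" "\<forall>t\<in>{a..b}-N. P t" by blast
  have "AE t in lebesgue. t \<in> {a..b} \<longrightarrow> P t"
    by (rule AE_I'[of N]) (use N in \<open>auto simp: negligible_iff_null_sets\<close>)
  then show "AE t in lebesgue_on {a..b}. P t"
    by (subst AE_restrict_space_iff) auto
qed

lemma negligible_reflect:
  fixes N :: "real set"
  assumes "negligible N"
  shows "negligible ((\<lambda>x. b - x) ` N)"
  by (rule negligible_differentiable_image_negligible) (use assms in \<open>auto intro!: derivative_intros\<close>)

lemma abs_cont_on_subset:
  assumes f: "abs_cont_on K f" and K: "K' \<subseteq> K" shows "abs_cont_on K' f"
  unfolding abs_cont_on_def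
proof (intro allI impI)
  fix e :: real assume e: "e > 0"
  obtain d where d: "d > 0" and H: "\<forall>(N::nat) (x::nat \<Rightarrow> real) (y::nat \<Rightarrow> real).
        (\<forall>i<N. x i \<in> K \<and> y i \<in> K \<and> x i \<le> y i) \<and>
        (\<forall>i<N. \<forall>j<N. i \<noteq> j \<longrightarrow> y i \<le> x j \<or> y j \<le> x i) \<and>
        (\<Sum>i<N. y i - x i) < d
        \<longrightarrow> (\<Sum>i<N. \<bar>f (y i) - f (x i)\<bar>) < e"
    using f[unfolded abs_cont_on_def, rule_format, OF e] by blast
  show "\<exists>d>0. \<forall>(N::nat) (x::nat \<Rightarrow> real) (y::nat \<Rightarrow> real).
        (\<forall>i<N. x i \<in> K' \<and> y i \<in> K' \<and> x i \<le> y i) \<and>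
        (\<forall>i<N. \<forall>j<N. i \<noteq> j \<longrightarrow> y i \<le> x j \<or> y j \<le> x i) \<and>
        (\<Sum>i<N. y i - x i) < d
        \<longrightarrow> (\<Sum>i<N. \<bar>f (y i) - f (x i)\<bar>) < e"
  proof (intro exI[of _ d] conjI allI impI)
    show "d > 0" by fact
    fix N :: nat and x y :: "nat \<Rightarrow> real"
    assume A: "(\<forall>i<N. x i \<in> K' \<and> y i \<in> K' \<and> x i \<le> y i) \<and>
        (\<forall>i<N. \<forall>j<N. i \<noteq> j \<longrightarrow> y i \<le> x j \<or> y j \<le> x i) \<and>
        (\<Sum>i<N. y i - x i) < d"
    then have "(\<forall>i<N. x i \<in> K \<and> y i \<in> K \<and> x i \<le> y i) \<and>
        (\<forall>i<N. \<forall>j<N. i \<noteq> j \<longrightarrow> y i \<le> x j \<or> y j \<le> x i) \<and>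
        (\<Sum>i<N. y i - x i) < d" using K by blast
    then show "(\<Sum>i<N. \<bar>f (y i) - f (x i)\<bar>) < e" using H by blast
  qed
qed

lemma abs_cont_on_diff:
  assumes f: "abs_cont_on K f" and g: "abs_cont_on K g"
  shows "abs_cont_on K (\<lambda>t. f t - g t)"
  unfolding abs_cont_on_def
proof (intro allI impI)
  fix e :: real assume e: "e > 0"
  obtain d1 where d1: "d1 > 0" and H1: "\<forall>(N::nat) (x::nat \<Rightarrow> real) (y::nat \<Rightarrow> real).
        (\<forall>i<N. x i \<in> K \<and> y i \<in> K \<and> x i \<le> y i) \<and>
        (\<forall>i<N. \<forall>j<N. i \<noteq> j \<longrightarrow> y i \<le> x j \<or> y j \<le> x i) \<and>
        (\<Sum>i<N. y i - x i) < d1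
        \<longrightarrow> (\<Sum>i<N. \<bar>f (y i) - f (x i)\<bar>) < e/2"
    using f[unfolded abs_cont_on_def, rule_format, of "e/2"] e by auto
  obtain d2 where d2: "d2 > 0" and H2: "\<forall>(N::nat) (x::nat \<Rightarrow> real) (y::nat \<Rightarrow> real).
        (\<forall>i<N. x i \<in> K \<and> y i \<in> K \<and> x i \<le> y i) \<and>
        (\<forall>i<N. \<forall>j<N. i \<noteq> j \<longrightarrow> y i \<le> x j \<or> y j \<le> x i) \<and>
        (\<Sum>i<N. y i - x i) < d2
        \<longrightarrow> (\<Sum>i<N. \<bar>g (y i) - g (x i)\<bar>) < e/2"
    using g[unfolded abs_cont_on_def, rule_format, of "e/2"] e by auto
  show "\<exists>d>0. \<forall>(N::nat) (x::nat \<Rightarrow> real) (y::nat \<Rightarrow> real).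
        (\<forall>i<N. x i \<in> K \<and> y i \<in> K \<and> x i \<le> y i) \<and>
        (\<forall>i<N. \<forall>j<N. i \<noteq> j \<longrightarrow> y i \<le> x j \<or> y j \<le> x i) \<and>
        (\<Sum>i<N. y i - x i) < d
        \<longrightarrow> (\<Sum>i<N. \<bar>(f (y i) - g (y i)) - (f (x i) - g (x i))\<bar>) < e"
  proof (intro exI[of _ "min d1 d2"] conjI allI impI)
    show "min d1 d2 > 0" using d1 d2 by simp
    fix N :: nat and x y :: "nat \<Rightarrow> real"
    assume A: "(\<forall>i<N. x i \<in> K \<and> y i \<in> K \<and> x i \<le> y i) \<and>
        (\<forall>i<N. \<forall>j<N. i \<noteq> j \<longrightarrow> y i \<le> x j \<or> y j \<le> x i) \<and>
        (\<Sum>i<N. y i - x i) < min d1 d2"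
    have "(\<Sum>i<N. \<bar>(f (y i) - g (y i)) - (f (x i) - g (x i))\<bar>)
          \<le> (\<Sum>i<N. \<bar>f (y i) - f (x i)\<bar> + \<bar>g (y i) - g (x i)\<bar>)"
      by (rule sum_mono) linarith
    also have "\<dots> = (\<Sum>i<N. \<bar>f (y i) - f (x i)\<bar>) + (\<Sum>i<N. \<bar>g (y i) - g (x i)\<bar>)"
      by (rule sum.distrib)
    also have "\<dots> < e/2 + e/2"
      using H1[rule_format, of N x y] H2[rule_format, of N x y] A by auto
    finally show "(\<Sum>i<N. \<bar>(f (y i) - g (y i)) - (f (x i) - g (x i))\<bar>) < e" by simp
  qed
qed

lemma abs_cont_on_cmult:
  assumes f: "abs_cont_on K f"
  shows "abs_cont_on K (\<lambda>t. c * f t)"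
proof (cases "c = 0")
  case True then show ?thesis unfolding abs_cont_on_def by (auto intro: exI[of _ 1])
next
  case False
  show ?thesis unfolding abs_cont_on_def
  proof (intro allI impI)
    fix e :: real assume e: "e > 0"
    then have "e / \<bar>c\<bar> > 0" using False by simp
    then obtain d where d: "d > 0" and H: "\<forall>(N::nat) (x::nat \<Rightarrow> real) (y::nat \<Rightarrow> real).
        (\<forall>i<N. x i \<in> K \<and> y i \<in> K \<and> x i \<le> y i) \<and>
        (\<forall>i<N. \<forall>j<N. i \<noteq> j \<longrightarrow> y i \<le> x j \<or> y j \<le> x i) \<and>
        (\<Sum>i<N. y i - x i) < d
        \<longrightarrow> (\<Sum>i<N. \<bar>f (y i) - f (x i)\<bar>) < e / \<bar>c\<bar>"
      using f unfolding abs_cont_on_def by blast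
    show "\<exists>d>0. \<forall>(N::nat) (x::nat \<Rightarrow> real) (y::nat \<Rightarrow> real).
        (\<forall>i<N. x i \<in> K \<and> y i \<in> K \<and> x i \<le> y i) \<and>
        (\<forall>i<N. \<forall>j<N. i \<noteq> j \<longrightarrow> y i \<le> x j \<or> y j \<le> x i) \<and>
        (\<Sum>i<N. y i - x i) < d
        \<longrightarrow> (\<Sum>i<N. \<bar>c * f (y i) - c * f (x i)\<bar>) < e"
    proof (intro exI[of _ d] conjI allI impI)
      show "d > 0" by fact
      fix N :: nat and x y :: "nat \<Rightarrow> real"
      assume A: "(\<forall>i<N. x i \<in> K \<and> y i \<in> K \<and> x i \<le> y i) \<and>
        (\<forall>i<N. \<forall>j<N. i \<noteq> j \<longrightarrow> y i \<le> x j \<or> y j \<le> x i) \<and>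
        (\<Sum>i<N. y i - x i) < d"
      have "(\<Sum>i<N. \<bar>c * f (y i) - c * f (x i)\<bar>) = \<bar>c\<bar> * (\<Sum>i<N. \<bar>f (y i) - f (x i)\<bar>)"
        by (simp add: sum_distrib_left abs_mult flip: right_diff_distrib)
      also have "\<dots> < \<bar>c\<bar> * (e / \<bar>c\<bar>)"
        using H[rule_format, OF A] False by (intro mult_strict_left_mono) auto
      finally show "(\<Sum>i<N. \<bar>c * f (y i) - c * f (x i)\<bar>) < e" using False by simp
    qed
  qed
qed

lemma abs_cont_on_reflect:
  assumes f: "abs_cont_on {0..b} f"
  shows "abs_cont_on {0..b} (\<lambda>t. f (b - t))"
  unfolding abs_cont_on_def
proof (intro allI impI)
  fix e :: real assume e: "e > 0"
  then obtain d where d: "d > 0" and H: "\<forall>(N::nat) (x::nat \<Rightarrow> real) (y::nat \<Rightarrow> real).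
        (\<forall>i<N. x i \<in> {0..b} \<and> y i \<in> {0..b} \<and> x i \<le> y i) \<and>
        (\<forall>i<N. \<forall>j<N. i \<noteq> j \<longrightarrow> y i \<le> x j \<or> y j \<le> x i) \<and>
        (\<Sum>i<N. y i - x i) < d
        \<longrightarrow> (\<Sum>i<N. \<bar>f (y i) - f (x i)\<bar>) < e"
    using f unfolding abs_cont_on_def by blast
  show "\<exists>d>0. \<forall>(N::nat) (x::nat \<Rightarrow> real) (y::nat \<Rightarrow> real).
        (\<forall>i<N. x i \<in> {0..b} \<and> y i \<in> {0..b} \<and> x i \<le> y i) \<and>
        (\<forall>i<N. \<forall>j<N. i \<noteq> j \<longrightarrow> y i \<le> x j \<or> y j \<le> x i) \<and>
        (\<Sum>i<N. y i - x i) < d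
        \<longrightarrow> (\<Sum>i<N. \<bar>f (b - y i) - f (b - x i)\<bar>) < e"
  proof (intro exI[of _ d] conjI allI impI)
    show "d > 0" by fact
    fix N :: nat and x y :: "nat \<Rightarrow> real"
    assume A: "(\<forall>i<N. x i \<in> {0..b} \<and> y i \<in> {0..b} \<and> x i \<le> y i) \<and>
        (\<forall>i<N. \<forall>j<N. i \<noteq> j \<longrightarrow> y i \<le> x j \<or> y j \<le> x i) \<and>
        (\<Sum>i<N. y i - x i) < d"
    have A': "(\<forall>i<N. (b - y i) \<in> {0..b} \<and> (b - x i) \<in> {0..b} \<and> (b - y i) \<le> (b - x i)) \<and>
        (\<forall>i<N. \<forall>j<N. i \<noteq> j \<longrightarrow> (b - x i) \<le> (b - y j) \<or> (b - x j) \<le> (b - y i)) \<and>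
        (\<Sum>i<N. (b - x i) - (b - y i)) < d"
      using A by (auto; metis)
    have "(\<Sum>i<N. \<bar>f (b - y i) - f (b - x i)\<bar>) = (\<Sum>i<N. \<bar>f (b - x i) - f (b - y i)\<bar>)"
      by (simp add: abs_minus_commute)
    also have "\<dots> < e" using H[rule_format, OF A'] .
    finally show "(\<Sum>i<N. \<bar>f (b - y i) - f (b - x i)\<bar>) < e" .
  qed
qed



lemma bvp_unique:
  assumes nr: "nonresonant m b c BC"
    and lin: "\<And>D1 D2. BC D1 \<Longrightarrow> BC D2 \<Longrightarrow> BC (\<lambda>k t. D1 k t - D2 k t)"
    and s1: "bvp_sol m b c BC u1 \<sigma>" and s2: "bvp_sol m b c BC u2 \<sigma>"
  shows "\<forall>t\<in>{0..b}. u1 t = u2 t"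
proof -
  obtain D1 where D1: "W_derivs m b u1 D1" "BC D1" "AE t in lebesgue_on {0..b}.
           \<exists>d. (D1 (m - 1) has_real_derivative d) (at t within {0..b}) \<and>
               d + (\<Sum>k<m. c k t * D1 k t) = \<sigma> t"
    using s1 unfolding bvp_sol_def by blast
  obtain D2 where D2: "W_derivs m b u2 D2" "BC D2" "AE t in lebesgue_on {0..b}.
           \<exists>d. (D2 (m - 1) has_real_derivative d) (at t within {0..b}) \<and>
               d + (\<Sum>k<m. c k t * D2 k t) = \<sigma> t"
    using s2 unfolding bvp_sol_def by blast
  have "bvp_sol m b c BC (\<lambda>t. u1 t - u2 t) (\<lambda>_. 0)"
    unfolding bvp_sol_def
  proof (intro exI[of _ "\<lambda>k t. D1 k t - D2 k t"] conjI)
    show "W_derivs m b (\<lambda>t. u1 t - u2 t) (\<lambda>k t. D1 k t - D2 k t)"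
      using D1(1) D2(1) unfolding W_derivs_def by (auto intro!: DERIV_diff abs_cont_on_diff)
    show "BC (\<lambda>k t. D1 k t - D2 k t)" by (rule lin) (use D1 D2 in auto)
    show "AE t in lebesgue_on {0..b}.
           \<exists>d. ((\<lambda>t. D1 (m - 1) t - D2 (m - 1) t) has_real_derivative d) (at t within {0..b}) \<and>
               d + (\<Sum>k<m. c k t * (D1 k t - D2 k t)) = 0"
      using D1(3) D2(3)
    proof eventually_elim
      case (elim t)
      then obtain d1 d2 where d: "(D1 (m - 1) has_real_derivative d1) (at t within {0..b})"
        "d1 + (\<Sum>k<m. c k t * D1 k t) = \<sigma> t"
        "(D2 (m - 1) has_real_derivative d2) (at t within {0..b})"
        "d2 + (\<Sum>k<m. c k t * D2 k t) = \<sigma> t" by blast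
      have "(d1 - d2) + (\<Sum>k<m. c k t * (D1 k t - D2 k t)) = 0"
        using d(2,4) by (simp add: right_diff_distrib sum_subtractf)
      then show ?case using d(1,3) by (intro exI[of _ "d1 - d2"]) (auto intro!: DERIV_diff)
    qed
  qed
  then show ?thesis using nr unfolding nonresonant_def by auto
qed

lemma W_derivs_unique:
  assumes b: "0 < b" and D: "W_derivs m b u D" and E: "W_derivs m b u E"
  shows "k < m \<Longrightarrow> t \<in> {0..b} \<Longrightarrow> D k t = E k t"
proof (induction k arbitrary: t)
  case 0
  then show ?case using D E unfolding W_derivs_def by auto
next
  case (Suc k)
  then have k: "k < m - 1" by simp
  have eq: "\<And>x. x \<in> {0..b} \<Longrightarrow> D k x = E k x" using Suc by simp
  have dD: "(D k has_real_derivative D (Suc k) t) (at t within {0..b})"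
    using D k Suc.prems unfolding W_derivs_def by blast
  have dE: "(E k has_real_derivative E (Suc k) t) (at t within {0..b})"
    using E k Suc.prems unfolding W_derivs_def by blast
  have dE': "(E k has_real_derivative D (Suc k) t) (at t within {0..b})"
    by (rule has_field_derivative_transform_within[OF dD, of 1]) (use eq Suc.prems in auto)
  show ?case
    using vector_derivative_unique_within_closed_interval[of 0 b t "E k" "D (Suc k) t" "E (Suc k) t"]
      dE dE' b Suc.prems by (simp add: has_real_derivative_iff_has_vector_derivative)
qed

lemma reflect_sol:
  fixes T sg :: real
  assumes T: "T > 0" and m: "even m" "m \<ge> 2"
   and csym: "\<And>k t. t \<in> {0..2*T} \<Longrightarrow> t \<noteq> T \<Longrightarrow> c k t * (-1)^k = c k (2*T - t)"
   and s: "sg * sg = 1"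
   and \<sigma>sym: "\<And>t. t \<in> {0..2*T} \<Longrightarrow> t \<noteq> T \<Longrightarrow> \<sigma> t = sg * \<sigma> (2*T - t)"
   and nr: "nonresonant m (2*T) c (BC_P m (2*T))"
   and sol: "bvp_sol m (2*T) c (BC_P m (2*T)) u \<sigma>"
  shows "\<exists>D. W_derivs m (2*T) u D \<and> BC_P m (2*T) D \<and>
        (AE t in lebesgue_on {0..2*T}.
           \<exists>d. (D (m - 1) has_real_derivative d) (at t within {0..2*T}) \<and>
               d + (\<Sum>k<m. c k t * D k t) = \<sigma> t) \<and>
        (\<forall>k<m. \<forall>t\<in>{0..2*T}. D k t = sg * (-1)^k * D k (2*T - t))"
proof -
  obtain D where D: "W_derivs m (2*T) u D" "BC_P m (2*T) D" "AE t in lebesgue_on {0..2*T}.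
           \<exists>d. (D (m - 1) has_real_derivative d) (at t within {0..2*T}) \<and>
               d + (\<Sum>k<m. c k t * D k t) = \<sigma> t"
    using sol unfolding bvp_sol_def by blast
  define E where "E k t = sg * (-1)^k * D k (2*T - t)" for k t
  define v where "v t = sg * u (2*T - t)" for t
  have img: "(\<lambda>t. 2*T - t) ` {0..2*T} = {0..2*T}"
  proof
    show "(\<lambda>t. 2*T - t) ` {0..2*T} \<subseteq> {0..2*T}" by auto
    show "{0..2*T} \<subseteq> (\<lambda>t. 2*T - t) ` {0..2*T}"
    proof
      fix x assume "x \<in> {0..2*T}"
      then show "x \<in> (\<lambda>t. 2*T - t) ` {0..2*T}" by (intro rev_image_eqI[of "2*T - x"]) auto
    qed
  qed
  have chain: "((\<lambda>t. sg * (-1)^k * D k (2*T - t)) has_real_derivative (sg * (-1)^k * (- d))) (at t within {0..2*T})"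
    if t: "t \<in> {0..2*T}" and dd: "(D k has_real_derivative d) (at (2*T - t) within {0..2*T})" for k t d
  proof -
    have r: "((\<lambda>t. 2*T - t) has_vector_derivative -1) (at t within {0..2*T})"
      unfolding has_real_derivative_iff_has_vector_derivative[symmetric]
      by (auto intro!: derivative_eq_intros)
    have "((D k \<circ> (\<lambda>t. 2*T - t)) has_vector_derivative (-1 * d)) (at t within {0..2*T})"
      by (rule field_vector_diff_chain_within[OF r]) (use dd img in simp)
    then have "((\<lambda>t. D k (2*T - t)) has_real_derivative (- d)) (at t within {0..2*T})"
      by (simp add: has_real_derivative_iff_has_vector_derivative o_def)
    then show ?thesis by (rule DERIV_cmult)
  qed
  have m1: "(-1::real)^(m-1) = -1"
    using m by (intro neg_one_odd_power) (auto elim!: evenE)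
  have WE: "W_derivs m (2*T) v E"
    unfolding W_derivs_def
  proof (intro conjI ballI allI impI)
    fix t :: real assume t: "t \<in> {0..2*T}"
    then show "E 0 t = v t" using D(1) unfolding W_derivs_def E_def v_def by auto
  next
    fix k t assume k: "k < m - 1" and t: "t \<in> {0..2*T}"
    have "(D k has_real_derivative D (Suc k) (2*T - t)) (at (2*T - t) within {0..2*T})"
      using D(1) k t unfolding W_derivs_def by auto
    from chain[OF t this] show "(E k has_real_derivative E (Suc k) t) (at t within {0..2*T})"
      unfolding E_def by (simp add: fun_eq_iff)
  next
    have "abs_cont_on {0..2*T} (\<lambda>t. (sg * (-1)^(m-1)) * D (m - 1) (2*T - t))"
      by (rule abs_cont_on_cmult[OF abs_cont_on_reflect]) (use D(1) in \<open>simp add: W_derivs_def\<close>)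
    then show "abs_cont_on {0..2*T} (E (m - 1))" unfolding E_def by (simp add: fun_eq_iff)
  qed
  have BE: "BC_P m (2*T) E" using D(2) unfolding BC_P_def E_def by simp
  obtain N where N: "negligible N" "\<forall>t\<in>{0..2*T}-N.
           \<exists>d. (D (m - 1) has_real_derivative d) (at t within {0..2*T}) \<and>
               d + (\<Sum>k<m. c k t * D k t) = \<sigma> t"
    using D(3) unfolding AE_on_iff by blast
  have AEE: "AE t in lebesgue_on {0..2*T}.
           \<exists>d. (E (m - 1) has_real_derivative d) (at t within {0..2*T}) \<and>
               d + (\<Sum>k<m. c k t * E k t) = \<sigma> t"
    unfolding AE_on_iff
  proof (intro exI[of _ "(\<lambda>x. 2*T - x) ` N \<union> {T}"] conjI ballI)
    show "negligible ((\<lambda>x. 2*T - x) ` N \<union> {T})" using negligible_reflect[OF N(1)] by simp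
    fix t assume t: "t \<in> {0..2*T} - ((\<lambda>x. 2*T - x) ` N \<union> {T})"
    then have t': "2*T - t \<in> {0..2*T} - N" by (auto simp: image_iff)
    then obtain d where d: "(D (m - 1) has_real_derivative d) (at (2*T - t) within {0..2*T})"
      "d + (\<Sum>k<m. c k (2*T - t) * D k (2*T - t)) = \<sigma> (2*T - t)"
      using N(2) by blast
    have dE: "(E (m - 1) has_real_derivative sg * d) (at t within {0..2*T})"
      using chain[OF _ d(1)] t m1 unfolding E_def by (simp add: fun_eq_iff)
    have "(\<Sum>k<m. c k t * E k t) = sg * (\<Sum>k<m. c k (2*T - t) * D k (2*T - t))"
      unfolding E_def sum_distrib_left
    proof (rule sum.cong[OF refl])
      fix k assume "k \<in> {..<m}"
      have "c k t * (-1)^k = c k (2*T - t)" using csym[of t k] t by auto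
      then show "c k t * (sg * (- 1) ^ k * D k (2 * T - t)) = sg * (c k (2 * T - t) * D k (2 * T - t))"
        by (metis mult.assoc mult.left_commute)
    qed
    then have "sg * d + (\<Sum>k<m. c k t * E k t) = sg * (d + (\<Sum>k<m. c k (2*T - t) * D k (2*T - t)))"
      by (simp add: algebra_simps)
    also have "\<dots> = sg * \<sigma> (2*T - t)" using d(2) by simp
    also have "\<dots> = \<sigma> t" using \<sigma>sym[of t] t by auto
    finally show "\<exists>d. (E (m - 1) has_real_derivative d) (at t within {0..2*T}) \<and>
               d + (\<Sum>k<m. c k t * E k t) = \<sigma> t" using dE by blast
  qed
  have "bvp_sol m (2*T) c (BC_P m (2*T)) v \<sigma>"
    unfolding bvp_sol_def using WE BE AEE by blast
  then have uv: "\<forall>t\<in>{0..2*T}. u t = v t"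
    by (intro bvp_unique[OF nr _ sol]) (auto simp: BC_P_def)
  have WE': "W_derivs m (2*T) u E"
    using WE uv unfolding W_derivs_def by auto
  have "\<forall>k<m. \<forall>t\<in>{0..2*T}. D k t = E k t"
    using W_derivs_unique[OF _ D(1) WE'] T by auto
  then show ?thesis using D unfolding E_def by blast
qed



lemma restrict_sol:
  assumes T: "T > 0" and W: "W_derivs m (2*T) u D" and BC: "BC D"
   and AE: "AE t in lebesgue_on {0..2*T}. \<exists>d. (D (m - 1) has_real_derivative d) (at t within {0..2*T})
              \<and> d + (\<Sum>k<m. c k t * D k t) = \<sigma>e t"
   and ca: "\<And>k t. t \<in> {0..T} \<Longrightarrow> c k t = a k t"
   and \<sigma>e: "\<And>t. t \<in> {0..T} \<Longrightarrow> \<sigma>e t = \<sigma> t"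
  shows "bvp_sol m T a BC u \<sigma>"
  unfolding bvp_sol_def
proof (intro exI[of _ D] conjI)
  have sub: "{0..T} \<subseteq> {0..2*T}" using T by auto
  show "W_derivs m T u D"
    using W sub unfolding W_derivs_def
    by (auto intro!: DERIV_subset[OF _ sub] abs_cont_on_subset[OF _ sub])
  show "BC D" by fact
  obtain N where N: "negligible N" "\<forall>t\<in>{0..2*T}-N. \<exists>d. (D (m - 1) has_real_derivative d) (at t within {0..2*T})
              \<and> d + (\<Sum>k<m. c k t * D k t) = \<sigma>e t"
    using AE unfolding AE_on_iff by blast
  show "AE t in lebesgue_on {0..T}. \<exists>d. (D (m - 1) has_real_derivative d) (at t within {0..T})
              \<and> d + (\<Sum>k<m. a k t * D k t) = \<sigma> t"
    unfolding AE_on_iff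
  proof (intro exI[of _ N] conjI ballI)
    show "negligible N" by fact
    fix t assume t: "t \<in> {0..T} - N"
    then obtain d where d: "(D (m - 1) has_real_derivative d) (at t within {0..2*T})"
      "d + (\<Sum>k<m. c k t * D k t) = \<sigma>e t" using N(2) sub by blast
    have "(\<Sum>k<m. c k t * D k t) = (\<Sum>k<m. a k t * D k t)"
      using ca t by auto
    then show "\<exists>d. (D (m - 1) has_real_derivative d) (at t within {0..T})
              \<and> d + (\<Sum>k<m. a k t * D k t) = \<sigma> t"
      using d DERIV_subset[OF d(1) sub] \<sigma>e t by auto
  qed
qed

lemma ext_integrable:
  fixes \<sigma> :: "real \<Rightarrow> real"
  assumes T: "T > 0" and \<sigma>: "\<sigma> absolutely_integrable_on {0..T}"
  shows "(\<lambda>t. if t \<le> T then \<sigma> t else sg * \<sigma> (2*T - t)) absolutely_integrable_on {0..2*T}"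
proof -
  have img: "(\<lambda>x. (1 / -1) *\<^sub>R x - ((1 / -1) *\<^sub>R (2*T))) ` cbox 0 T = {T..2*T}"
  proof
    show "(\<lambda>x. (1 / -1) *\<^sub>R x - ((1 / -1) *\<^sub>R (2*T))) ` cbox 0 T \<subseteq> {T..2*T}" by auto
    show "{T..2*T} \<subseteq> (\<lambda>x. (1 / -1) *\<^sub>R x - ((1 / -1) *\<^sub>R (2*T))) ` cbox 0 T"
    proof
      fix x assume "x \<in> {T..2*T}"
      then show "x \<in> (\<lambda>x. (1 / -1) *\<^sub>R x - ((1 / -1) *\<^sub>R (2*T))) ` cbox 0 T"
        by (intro rev_image_eqI[of "2*T - x"]) auto
    qed
  qed
  have i1: "\<sigma> integrable_on cbox 0 T" "(\<lambda>x. \<bar>\<sigma> x\<bar>) integrable_on cbox 0 T"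
    using \<sigma> unfolding absolutely_integrable_on_def by auto
  have "(\<lambda>x. \<sigma> ((-1) *\<^sub>R x + 2*T)) integrable_on {T..2*T}"
    using integrable_on_affinity[of "-1" \<sigma> 0 T "2*T"] i1(1) img by simp
  moreover have "(\<lambda>x. (\<lambda>y. \<bar>\<sigma> y\<bar>) ((-1) *\<^sub>R x + 2*T)) integrable_on {T..2*T}"
    using integrable_on_affinity[of "-1" "\<lambda>x. \<bar>\<sigma> x\<bar>" 0 T "2*T"] i1(2) img by simp
  ultimately have "(\<lambda>x. \<sigma> (2*T - x)) absolutely_integrable_on {T..2*T}"
    unfolding absolutely_integrable_on_def by (simp add: algebra_simps)
  then have "(\<lambda>x. sg *\<^sub>R \<sigma> (2*T - x)) absolutely_integrable_on {T..2*T}"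
    by (rule absolutely_integrable_scaleR_left)
  then have r: "(\<lambda>t. if t \<le> T then \<sigma> t else sg * \<sigma> (2*T - t)) absolutely_integrable_on {T..2*T}"
    by (rule absolutely_integrable_spike[of _ _ "{T}"]) auto
  have l: "(\<lambda>t. if t \<le> T then \<sigma> t else sg * \<sigma> (2*T - t)) absolutely_integrable_on {0..T}"
    by (rule absolutely_integrable_spike[OF \<sigma>, of "{}"]) auto
  show ?thesis
    by (rule absolutely_integrable_on_combine[OF l r]) (use T in auto)
qed

lemma integral_le_ae:
  fixes f g :: "real \<Rightarrow> real"
  assumes f: "f integrable_on S" and g: "g integrable_on S" and N: "negligible N"
    and le: "\<And>x. x \<in> S - N \<Longrightarrow> f x \<le> g x"
  shows "integral S f \<le> integral S g"
proof -
  let ?h = "\<lambda>x. if x \<in> N then 0 else g x - f x"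
  have hi: "((\<lambda>x. g x - f x) has_integral integral S (\<lambda>x. g x - f x)) S"
    using f g by (intro integrable_integral integrable_diff)
  have "(?h has_integral integral S (\<lambda>x. g x - f x)) S"
    by (rule has_integral_spike[OF N _ hi]) auto
  then have "0 \<le> integral S (\<lambda>x. g x - f x)"
    by (rule has_integral_nonneg) (use le in auto)
  then show ?thesis using integral_diff[OF g f] by simp
qed

lemma ae_ext:
  fixes T :: real
  assumes "AE t in lebesgue_on {0..T}. P t"
  shows "\<exists>N. negligible N \<and> (\<forall>s\<in>{0..2*T}-N. if s \<le> T then P s else P (2*T - s))"
proof -
  obtain N0 where N0: "negligible N0" "\<forall>t\<in>{0..T}-N0. P t"
    using assms unfolding AE_on_iff by blast
  show ?thesis
  proof (intro exI[of _ "N0 \<union> (\<lambda>x. 2*T - x) ` N0"] conjI ballI)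
    show "negligible (N0 \<union> (\<lambda>x. 2*T - x) ` N0)" using N0(1) negligible_reflect[OF N0(1)] by simp
    fix s assume s: "s \<in> {0..2*T} - (N0 \<union> (\<lambda>x. 2*T - x) ` N0)"
    show "if s \<le> T then P s else P (2*T - s)"
    proof (cases "s \<le> T")
      case True then show ?thesis using s N0(2) by auto
    next
      case False
      have "2*T - s \<notin> N0"
      proof
        assume "2*T - s \<in> N0"
        then have "2*T - (2*T - s) \<in> (\<lambda>x. 2*T - x) ` N0" by blast
        then show False using s by simp
      qed
      then show ?thesis using False s N0(2) by auto
    qed
  qed
qed



theorem theorem6p2:
  fixes n :: nat and T \<alpha> :: real and a :: "nat \<Rightarrow> real \<Rightarrow> real"
    and GP :: "real \<Rightarrow> real \<Rightarrow> real"
    and \<sigma>1 \<sigma>2 uN uD :: "real \<Rightarrow> real"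
  assumes n: "n \<ge> 1" and T: "T > 0" and \<alpha>: "\<alpha> \<ge> 1"
    and a_meas: "\<And>k. k < 2*n \<Longrightarrow> a k \<in> borel_measurable (lebesgue_on {0..T})"
    and a_Lalpha: "\<And>k. k < 2*n \<Longrightarrow> integrable (lebesgue_on {0..T}) (\<lambda>t. \<bar>a k t\<bar> powr \<alpha>)"
    and GP_green: "green_fun (2*n) (2*T) (ext_coeff T a) (BC_P (2*n) (2*T)) GP"
    and GN_ex: "\<exists>G. green_fun (2*n) T a (BC_N n T) G"
    and GD_ex: "\<exists>G. green_fun (2*n) T a (BC_D n T) G"
    and \<sigma>1: "\<sigma>1 absolutely_integrable_on {0..T}"
    and \<sigma>2: "\<sigma>2 absolutely_integrable_on {0..T}"
    and uN: "bvp_sol (2*n) T a (BC_N n T) uN \<sigma>1"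
    and uD: "bvp_sol (2*n) T a (BC_D n T) uD \<sigma>2"
  shows
    "((\<forall>t\<in>{0..2*T}. \<forall>s\<in>{0..2*T}. GP t s \<ge> 0) \<and>
        (AE t in lebesgue_on {0..T}. \<bar>\<sigma>2 t\<bar> \<le> \<sigma>1 t)
       \<longrightarrow> (\<forall>t\<in>{0..T}. \<bar>uD t\<bar> \<le> uN t))
     \<and> ((\<forall>t\<in>{0..2*T}. \<forall>s\<in>{0..2*T}. GP t s \<le> 0) \<and>
        (AE t in lebesgue_on {0..T}. 0 \<le> \<sigma>2 t \<and> \<sigma>2 t \<le> \<sigma>1 t)
       \<longrightarrow> (\<forall>t\<in>{0..T}. uN t \<le> 0 \<and> uN t \<le> uD t))
     \<and> ((\<forall>t\<in>{0..2*T}. \<forall>s\<in>{0..2*T}. GP t s \<le> 0) \<and>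
        (AE t in lebesgue_on {0..T}. \<sigma>1 t \<le> \<sigma>2 t \<and> \<sigma>2 t \<le> 0)
       \<longrightarrow> (\<forall>t\<in>{0..T}. uN t \<ge> 0 \<and> uD t \<le> uN t))"

proof -
  let ?c = "ext_coeff T a"
  define \<sigma>N where "\<sigma>N t = (if t \<le> T then \<sigma>1 t else 1 * \<sigma>1 (2*T - t))" for t
  define \<sigma>D where "\<sigma>D t = (if t \<le> T then \<sigma>2 t else (-1) * \<sigma>2 (2*T - t))" for t
  have m: "even (2*n)" "2*n \<ge> 2" using n by auto
  have csym: "?c k t * (-1)^k = ?c k (2*T - t)" if "t \<in> {0..2*T}" "t \<noteq> T" for k t
    using that by (cases "even k") (auto simp: ext_coeff_def)
  have nrP: "nonresonant (2*n) (2*T) ?c (BC_P (2*n) (2*T))"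
    using GP_green[unfolded green_fun_def, THEN conjunct1] .
  have nrN: "nonresonant (2*n) T a (BC_N n T)"
    using GN_ex unfolding green_fun_def by (elim exE conjE)
  have nrD: "nonresonant (2*n) T a (BC_D n T)"
    using GD_ex unfolding green_fun_def by (elim exE conjE)
  have iN: "\<sigma>N absolutely_integrable_on {0..2*T}"
    unfolding \<sigma>N_def by (rule ext_integrable[OF T \<sigma>1])
  have iD: "\<sigma>D absolutely_integrable_on {0..2*T}"
    unfolding \<sigma>D_def by (rule ext_integrable[OF T \<sigma>2])
  have gN: "(\<forall>t\<in>{0..2*T}. (\<lambda>s. GP t s * \<sigma>N s) absolutely_integrable_on {0..2*T}) \<and>
        bvp_sol (2*n) (2*T) ?c (BC_P (2*n) (2*T)) (\<lambda>t. integral {0..2*T} (\<lambda>s. GP t s * \<sigma>N s)) \<sigma>N"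
    using GP_green[unfolded green_fun_def, THEN conjunct2, rule_format, OF iN] .
  have gD: "(\<forall>t\<in>{0..2*T}. (\<lambda>s. GP t s * \<sigma>D s) absolutely_integrable_on {0..2*T}) \<and>
        bvp_sol (2*n) (2*T) ?c (BC_P (2*n) (2*T)) (\<lambda>t. integral {0..2*T} (\<lambda>s. GP t s * \<sigma>D s)) \<sigma>D"
    using GP_green[unfolded green_fun_def, THEN conjunct2, rule_format, OF iD] .
  have symN: "\<sigma>N t = 1 * \<sigma>N (2*T - t)" if "t \<in> {0..2*T}" "t \<noteq> T" for t
    using that unfolding \<sigma>N_def by auto
  have symD: "\<sigma>D t = (-1) * \<sigma>D (2*T - t)" if "t \<in> {0..2*T}" "t \<noteq> T" for t
    using that unfolding \<sigma>D_def by auto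
  obtain DN where DN: "W_derivs (2*n) (2*T) (\<lambda>t. integral {0..2*T} (\<lambda>s. GP t s * \<sigma>N s)) DN"
      "BC_P (2*n) (2*T) DN"
      "AE t in lebesgue_on {0..2*T}.
           \<exists>d. (DN (2*n - 1) has_real_derivative d) (at t within {0..2*T}) \<and>
               d + (\<Sum>k<2*n. ?c k t * DN k t) = \<sigma>N t"
      "\<forall>k<2*n. \<forall>t\<in>{0..2*T}. DN k t = 1 * (-1)^k * DN k (2*T - t)"
    using reflect_sol[OF T m csym _ symN nrP gN[THEN conjunct2]] by auto
  obtain DD where DD: "W_derivs (2*n) (2*T) (\<lambda>t. integral {0..2*T} (\<lambda>s. GP t s * \<sigma>D s)) DD"
      "BC_P (2*n) (2*T) DD"
      "AE t in lebesgue_on {0..2*T}.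
           \<exists>d. (DD (2*n - 1) has_real_derivative d) (at t within {0..2*T}) \<and>
               d + (\<Sum>k<2*n. ?c k t * DD k t) = \<sigma>D t"
      "\<forall>k<2*n. \<forall>t\<in>{0..2*T}. DD k t = (-1) * (-1)^k * DD k (2*T - t)"
    using reflect_sol[OF T m csym _ symD nrP gD[THEN conjunct2]] by auto
  have BN: "BC_N n T DN"
    unfolding BC_N_def
  proof (intro allI impI conjI)
    fix k assume k: "k < n"
    then have k': "2*k+1 < 2*n" by simp
    have "DN (2*k+1) 0 = - DN (2*k+1) (2*T)" using DN(4)[rule_format, OF k', of 0] T by simp
    moreover have "DN (2*k+1) 0 = DN (2*k+1) (2*T)" using DN(2) k' unfolding BC_P_def by blast
    ultimately show "DN (2*k+1) 0 = 0" by simp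
    have "DN (2*k+1) T = - DN (2*k+1) (2*T - T)" using DN(4)[rule_format, OF k', of T] T by simp
    then show "DN (2*k+1) T = 0" by simp
  qed
  have BD: "BC_D n T DD"
    unfolding BC_D_def
  proof (intro allI impI conjI)
    fix k assume k: "k < n"
    then have k': "2*k < 2*n" by simp
    have "DD (2*k) 0 = - DD (2*k) (2*T)" using DD(4)[rule_format, OF k', of 0] T by simp
    moreover have "DD (2*k) 0 = DD (2*k) (2*T)" using DD(2) k' unfolding BC_P_def by blast
    ultimately show "DD (2*k) 0 = 0" by simp
    have "DD (2*k) T = - DD (2*k) (2*T - T)" using DD(4)[rule_format, OF k', of T] T by simp
    then show "DD (2*k) T = 0" by simp
  qed
  have ca: "?c k t = a k t" if "t \<in> {0..T}" for k t using that by (simp add: ext_coeff_def)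
  have solN: "bvp_sol (2*n) T a (BC_N n T) (\<lambda>t. integral {0..2*T} (\<lambda>s. GP t s * \<sigma>N s)) \<sigma>1"
    by (rule restrict_sol[where BC="BC_N n T", OF T DN(1) BN DN(3) ca]) (simp_all add: \<sigma>N_def)
  have solD: "bvp_sol (2*n) T a (BC_D n T) (\<lambda>t. integral {0..2*T} (\<lambda>s. GP t s * \<sigma>D s)) \<sigma>2"
    by (rule restrict_sol[where BC="BC_D n T", OF T DD(1) BD DD(3) ca]) (simp_all add: \<sigma>D_def)
  have uN_eq: "\<forall>t\<in>{0..T}. uN t = integral {0..2*T} (\<lambda>s. GP t s * \<sigma>N s)"
    by (rule bvp_unique[OF nrN _ uN solN]) (auto simp: BC_N_def)
  have uD_eq: "\<forall>t\<in>{0..T}. uD t = integral {0..2*T} (\<lambda>s. GP t s * \<sigma>D s)"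
    by (rule bvp_unique[OF nrD _ uD solD]) (auto simp: BC_D_def)
  have intN: "(\<lambda>s. GP t s * \<sigma>N s) integrable_on {0..2*T}" if "t \<in> {0..T}" for t
  proof -
    have "t \<in> {0..2*T}" using that T by auto
    then show ?thesis by (rule set_lebesgue_integral_eq_integral(1)[OF gN[THEN conjunct1, rule_format]])
  qed
  have intD: "(\<lambda>s. GP t s * \<sigma>D s) integrable_on {0..2*T}" if "t \<in> {0..T}" for t
  proof -
    have "t \<in> {0..2*T}" using that T by auto
    then show ?thesis by (rule set_lebesgue_integral_eq_integral(1)[OF gD[THEN conjunct1, rule_format]])
  qed
  have intD': "(\<lambda>s. - (GP t s * \<sigma>D s)) integrable_on {0..2*T}" if "t \<in> {0..T}" for t
    using integrable_neg[OF intD[OF that]] .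
  have int0: "(\<lambda>s. 0::real) integrable_on {0..2*T}" by (rule integrable_0)
  have tin: "t \<in> {0..T} \<Longrightarrow> t \<in> {0..2*T}" for t using T by auto
  show ?thesis
  proof (intro conjI impI ballI)
    fix t assume A: "(\<forall>t\<in>{0..2*T}. \<forall>s\<in>{0..2*T}. GP t s \<ge> 0) \<and>
        (AE t in lebesgue_on {0..T}. \<bar>\<sigma>2 t\<bar> \<le> \<sigma>1 t)" and t: "t \<in> {0..T}"
    obtain N where N: "negligible N" "\<forall>s\<in>{0..2*T}-N. if s \<le> T then \<bar>\<sigma>2 s\<bar> \<le> \<sigma>1 s
        else \<bar>\<sigma>2 (2*T - s)\<bar> \<le> \<sigma>1 (2*T - s)"
      using ae_ext[OF A[THEN conjunct2]] by blast
    have pw: "\<sigma>D s \<le> \<sigma>N s \<and> - \<sigma>D s \<le> \<sigma>N s" if "s \<in> {0..2*T}-N" for s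
    proof -
      have h: "s \<in> {0..2*T}-N" by fact
      show ?thesis using N(2)[rule_format, OF h] unfolding \<sigma>N_def \<sigma>D_def by (cases "s \<le> T") auto
    qed
    have G: "GP t s \<ge> 0" if "s \<in> {0..2*T}-N" for s using A t that T by auto
    have "integral {0..2*T} (\<lambda>s. GP t s * \<sigma>D s) \<le> integral {0..2*T} (\<lambda>s. GP t s * \<sigma>N s)"
      by (rule integral_le_ae[OF intD[OF t] intN[OF t] N(1)]) (use pw G in \<open>auto intro: mult_left_mono\<close>)
    moreover have "integral {0..2*T} (\<lambda>s. - (GP t s * \<sigma>D s)) \<le> integral {0..2*T} (\<lambda>s. GP t s * \<sigma>N s)"
    proof (rule integral_le_ae[OF intD'[OF t] intN[OF t] N(1)])
      fix s assume s: "s \<in> {0..2*T}-N"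
      have "GP t s * (- \<sigma>D s) \<le> GP t s * \<sigma>N s" using pw[OF s] G[OF s] by (intro mult_left_mono) auto
      then show "- (GP t s * \<sigma>D s) \<le> GP t s * \<sigma>N s" by simp
    qed
    ultimately show "\<bar>uD t\<bar> \<le> uN t" using uN_eq uD_eq t by (simp add: integral_neg)
  next
    fix t assume A: "(\<forall>t\<in>{0..2*T}. \<forall>s\<in>{0..2*T}. GP t s \<le> 0) \<and>
        (AE t in lebesgue_on {0..T}. 0 \<le> \<sigma>2 t \<and> \<sigma>2 t \<le> \<sigma>1 t)" and t: "t \<in> {0..T}"
    obtain N where N: "negligible N" "\<forall>s\<in>{0..2*T}-N. if s \<le> T then 0 \<le> \<sigma>2 s \<and> \<sigma>2 s \<le> \<sigma>1 s
        else 0 \<le> \<sigma>2 (2*T - s) \<and> \<sigma>2 (2*T - s) \<le> \<sigma>1 (2*T - s)"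
      using ae_ext[OF A[THEN conjunct2]] by blast
    have pw: "0 \<le> \<sigma>N s \<and> \<sigma>D s \<le> \<sigma>N s" if "s \<in> {0..2*T}-N" for s
    proof -
      have h: "s \<in> {0..2*T}-N" by fact
      show ?thesis using N(2)[rule_format, OF h] unfolding \<sigma>N_def \<sigma>D_def by (cases "s \<le> T") auto
    qed
    have G: "GP t s \<le> 0" if "s \<in> {0..2*T}-N" for s using A t that T by auto
    have "integral {0..2*T} (\<lambda>s. GP t s * \<sigma>N s) \<le> integral {0..2*T} (\<lambda>s. 0)"
      by (rule integral_le_ae[OF intN[OF t] int0 N(1)]) (use pw G in \<open>auto intro: mult_nonpos_nonneg\<close>)
    then show "uN t \<le> 0" using uN_eq t by simp
    have "integral {0..2*T} (\<lambda>s. GP t s * \<sigma>N s) \<le> integral {0..2*T} (\<lambda>s. GP t s * \<sigma>D s)"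
      by (rule integral_le_ae[OF intN[OF t] intD[OF t] N(1)]) (use pw G in \<open>auto intro: mult_left_mono_neg\<close>)
    then show "uN t \<le> uD t" using uN_eq uD_eq t by simp
  next
    fix t assume A: "(\<forall>t\<in>{0..2*T}. \<forall>s\<in>{0..2*T}. GP t s \<le> 0) \<and>
        (AE t in lebesgue_on {0..T}. \<sigma>1 t \<le> \<sigma>2 t \<and> \<sigma>2 t \<le> 0)" and t: "t \<in> {0..T}"
    obtain N where N: "negligible N" "\<forall>s\<in>{0..2*T}-N. if s \<le> T then \<sigma>1 s \<le> \<sigma>2 s \<and> \<sigma>2 s \<le> 0
        else \<sigma>1 (2*T - s) \<le> \<sigma>2 (2*T - s) \<and> \<sigma>2 (2*T - s) \<le> 0"
      using ae_ext[OF A[THEN conjunct2]] by blast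
    have pw: "\<sigma>N s \<le> 0 \<and> \<sigma>N s \<le> \<sigma>D s" if "s \<in> {0..2*T}-N" for s
    proof -
      have h: "s \<in> {0..2*T}-N" by fact
      show ?thesis using N(2)[rule_format, OF h] unfolding \<sigma>N_def \<sigma>D_def by (cases "s \<le> T") auto
    qed
    have G: "GP t s \<le> 0" if "s \<in> {0..2*T}-N" for s using A t that T by auto
    have "integral {0..2*T} (\<lambda>s. 0) \<le> integral {0..2*T} (\<lambda>s. GP t s * \<sigma>N s)"
      by (rule integral_le_ae[OF int0 intN[OF t] N(1)]) (use pw G in \<open>auto intro: mult_nonpos_nonpos\<close>)
    then show "uN t \<ge> 0" using uN_eq t by simp
    have "integral {0..2*T} (\<lambda>s. GP t s * \<sigma>D s) \<le> integral {0..2*T} (\<lambda>s. GP t s * \<sigma>N s)"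
      by (rule integral_le_ae[OF intD[OF t] intN[OF t] N(1)]) (use pw G in \<open>auto intro: mult_left_mono_neg\<close>)
    then show "uD t \<le> uN t" using uN_eq uD_eq t by simp
  qed
qed

end
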